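(* Let $n,m\ge1$ be integers, $\theta\in[0,2\pi)$ and $0\le w<\pi/2$. Then no non-zero positive RP-measure on $\mathbb{T}^2$ has support contained in $$S_{m,n}=\{\Phi(v_1,-v_2): (v_1,v_2)\in\mathbb{R}^2,\ e^{i(nv_1+mv_2)}=e^{i\omega}\text{ for some }\omega\in[\theta-w,\theta+w]\}.$$ In particular, no non-zero positive RP-measure has support contained in $\{\Phi(v_1,nv_1-\omega): v_1\in[0,2\pi),\ \omega\in[\theta-w,\theta+w]\}$.
   Context: $\Phi:\mathbb{R}^2\to\mathbb{T}^2$, $\Phi(x_1,x_2)=(e^{ix_1},e^{ix_2})$. RP-measures on $\mathbb{T}^2$: real Borel measures $\mu$ of bounded variation on $\mathbb{T}^2$ whose Poisson integral $P[d\mu](z)=\int_{\mathbb{T}^2}\prod_{j=1}^2\frac{1-|z_j|^2}{|\zeta_j-z_j|^2}\,d\mu(\zeta)$ is the real part of a holomorphic function on $\mathbb{D}^2$. *)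

theory Defs
  imports "HOL-Analysis.Analysis"
begin

definition Phi :: "real \<times> real \<Rightarrow> complex \<times> complex" where
  "Phi x = (exp (\<i> * complex_of_real (fst x)), exp (\<i> * complex_of_real (snd x)))"

definition torus2 :: "(complex \<times> complex) set" where
  "torus2 = {z. cmod (fst z) = 1 \<and> cmod (snd z) = 1}"

definition bidisc :: "(complex \<times> complex) set" where
  "bidisc = {z. cmod (fst z) < 1 \<and> cmod (snd z) < 1}"

definition holomorphic2_on :: "(complex \<times> complex \<Rightarrow> complex) \<Rightarrow> (complex \<times> complex) set \<Rightarrow> bool" where
  "holomorphic2_on f S \<longleftrightarrow>
     (\<forall>z\<in>S. \<exists>L. (f has_derivative L) (at z) \<and>
        (\<forall>c a b. L (c * a, c * b) = c * L (a, b)))"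

definition poisson_kernel2 :: "complex \<times> complex \<Rightarrow> complex \<times> complex \<Rightarrow> real" where
  "poisson_kernel2 z \<zeta> =
     (1 - (cmod (fst z))\<^sup>2) / (cmod (fst \<zeta> - fst z))\<^sup>2 *
     ((1 - (cmod (snd z))\<^sup>2) / (cmod (snd \<zeta> - snd z))\<^sup>2)"

definition poisson_integral2 :: "(complex \<times> complex) measure \<Rightarrow> complex \<times> complex \<Rightarrow> real" where
  "poisson_integral2 M z = (\<integral>\<zeta>. poisson_kernel2 z \<zeta> \<partial>M)"

definition pos_RP_measure :: "(complex \<times> complex) measure \<Rightarrow> bool" where
  "pos_RP_measure M \<longleftrightarrow>
     sets M = sets borel \<and> finite_measure M \<and> emeasure M (- torus2) = 0 \<and>
     (\<exists>f. holomorphic2_on f bidisc \<and> (\<forall>z\<in>bidisc. poisson_integral2 M z = Re (f z)))"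

definition measure_support :: "(complex \<times> complex) measure \<Rightarrow> (complex \<times> complex) set" where
  "measure_support M = {x. \<forall>U. open U \<and> x \<in> U \<longrightarrow> emeasure M U \<noteq> 0}"

definition S_set :: "int \<Rightarrow> int \<Rightarrow> real \<Rightarrow> real \<Rightarrow> (complex \<times> complex) set" where
  "S_set n m \<theta> w = {Phi (v1, - v2) | v1 v2. \<exists>\<omega>\<in>{\<theta> - w .. \<theta> + w}.
      exp (\<i> * complex_of_real (of_int n * v1 + of_int m * v2)) = exp (\<i> * complex_of_real \<omega>)}"

definition S'_set :: "int \<Rightarrow> real \<Rightarrow> real \<Rightarrow> (complex \<times> complex) set" where
  "S'_set n \<theta> w = {Phi (v1, of_int n * v1 - \<omega>) | v1 \<omega>. v1 \<in> {0..<2*pi} \<and> \<omega> \<in> {\<theta> - w .. \<theta> + w}}"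

end

theory Submission
  imports Defs "HOL-Complex_Analysis.Complex_Analysis"
begin

definition LL :: "real measure" where "LL = density lborel (\<lambda>x. ennreal (indicator {0..1} x))"
definition circ :: "real \<Rightarrow> complex" where "circ t = circlepath 0 (1/2) t"
definition ee :: "real \<Rightarrow> complex" where "ee t = exp (2 * of_real pi * \<i> * of_real t)"

lemma sets_LL[simp, measurable_cong]: "sets LL = sets borel"
  by (simp add: LL_def)
lemma space_LL[simp]: "space LL = UNIV"
  by (simp add: LL_def)

lemma LL_eq: "LL = density lborel (\<lambda>x. ennreal (indicator {0..1} x))"
  unfolding LL_def by simp

lemma finite_LL: "finite_measure LL"
proof (rule finite_measureI)
  show "emeasure LL (space LL) \<noteq> \<infinity>"
    unfolding LL_def by (simp add: emeasure_density ennreal_indicator)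
qed

lemma intL:
  fixes F :: "real \<Rightarrow> complex"
  assumes "continuous_on UNIV F"
  shows "integrable LL F" "integral\<^sup>L LL F = integral {0..1} F"
proof -
  have m: "F \<in> borel_measurable borel" using assms by (rule borel_measurable_continuous_onI)
  have si: "integrable lborel (\<lambda>x. indicator {0..1} x *\<^sub>R F x)"
    by (rule borel_integrable_compact) (auto intro: continuous_on_subset[OF assms])
  show "integrable LL F" unfolding LL_eq
    using m si by (subst integrable_density) auto
  have "integral\<^sup>L LL F = (LINT x:{0..1}|lborel. F x)"
    unfolding LL_eq set_lebesgue_integral_def using m by (subst integral_density) auto
  also have "\<dots> = integral {0..1} F"
    using si by (intro set_borel_integral_eq_integral) (simp add: set_integrable_def)
  finally show "integral\<^sup>L LL F = integral {0..1} F" .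
qed

lemma circ_eq: "circ t = (1/2) * ee t" by (simp add: circ_def ee_def circlepath)
lemma norm_ee[simp]: "norm (ee t) = 1" unfolding ee_def by (simp add: norm_exp_eq_Re)
lemma norm_circ[simp]: "norm (circ t) = 1/2" by (simp add: circ_eq norm_mult)
lemma cont_circ: "continuous_on UNIV circ" unfolding circ_def circlepath by (intro continuous_intros)
lemma cont_ee: "continuous_on UNIV ee" unfolding ee_def by (intro continuous_intros)

lemma cont_comp_circ:
  assumes "continuous_on (ball 0 1) g"
  shows "continuous_on UNIV (\<lambda>t. g (circ t))"
  by (rule continuous_on_compose2[OF assms cont_circ]) auto

lemma MV:
  assumes hol: "g holomorphic_on ball 0 1"
  shows "integral\<^sup>L LL (\<lambda>t. g (circ t)) = g 0"
proof -
  have cg: "continuous_on (ball 0 1) g" using hol holomorphic_on_imp_continuous_on by blast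
  have "continuous_on (cball 0 (1/2)) g"
    by (rule continuous_on_subset[OF cg]) auto
  moreover have "g holomorphic_on ball 0 (1/2)"
    by (rule holomorphic_on_subset[OF hol]) auto
  ultimately have "((\<lambda>u. g u / (u - 0)) has_contour_integral (2 * of_real pi * \<i> * g 0)) (circlepath 0 (1/2))"
    by (intro Cauchy_integral_circlepath) auto
  hence h: "((\<lambda>x::real. g (circ x) / circ x * vector_derivative (circlepath 0 (1/2)) (at x within {0..1}))
       has_integral (2 * of_real pi * \<i> * g 0)) {0..1}"
    by (simp add: has_contour_integral_def circ_def)
  have h2: "((\<lambda>x::real. (2 * of_real pi * \<i>) * g (circ x)) has_integral (2 * of_real pi * \<i> * g 0)) {0..1}"
  proof (rule has_integral_spike_finite[OF _ _ h, of "{}"])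
    fix x :: real assume "x \<in> {0..1} - {}"
    then have "vector_derivative (circlepath 0 (1/2)) (at (x::real) within {0..1}) = 2 * of_real pi * \<i> * circ x"
      using vector_derivative_circlepath01[of x 0 "1/2"] by (simp add: circ_def circlepath)
    moreover have "circ x \<noteq> 0" using norm_circ[of x] by (metis norm_zero zero_neq_numeral divide_eq_0_iff one_neq_zero)
    ultimately show "(2 * of_real pi * \<i>) * g (circ x) = g (circ x) / circ x * vector_derivative (circlepath 0 (1/2)) (at (x::real) within {0..1})" by (simp add: field_simps)
  qed auto
  have "((\<lambda>x::real. g (circ x)) has_integral g 0) {0..1}"
    using has_integral_mult_right[OF h2, of "inverse (2 * of_real pi * \<i>)"]
    by (simp add: field_simps)
  hence "integral {0..1::real} (\<lambda>x. g (circ x)) = g 0" by (rule integral_unique)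
  thus ?thesis using intL(2)[OF cont_comp_circ[OF cg]] by simp
qed

lemma ee_circ: "ee t = 2 * circ t" by (simp add: circ_eq)
lemma cnj_ee_mult[simp]: "cnj (ee t) * ee t = 1"
  using complex_norm_square[of "ee t"] by (simp add: mult.commute)

lemma MVpos:
  assumes hol: "g holomorphic_on ball 0 1" and n: "n \<ge> 1"
  shows "integral\<^sup>L LL (\<lambda>t. g (circ t) * ee t ^ n) = 0"
proof -
  have "(\<lambda>w. g w * (2 * w) ^ n) holomorphic_on ball 0 1"
    by (intro holomorphic_intros hol)
  from MV[OF this] n show ?thesis by (simp add: ee_circ)
qed

lemma contL: "continuous_on UNIV (F::real\<Rightarrow>complex) \<Longrightarrow> integrable LL F" by (rule intL(1))

lemma int_ee_pow: "n \<ge> 1 \<Longrightarrow> integral\<^sup>L LL (\<lambda>t. ee t ^ n) = 0"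
  using MVpos[of "\<lambda>_. 1" n] by simp

lemma int_cnj_ee_pow: "n \<ge> 1 \<Longrightarrow> integral\<^sup>L LL (\<lambda>t. cnj (ee t) ^ n) = 0"
  using int_ee_pow[of n] Bochner_Integration.integral_cnj[of LL "\<lambda>t. ee t ^ n"] by simp

definition hz :: "complex \<Rightarrow> complex \<Rightarrow> complex" where "hz \<zeta> w = \<zeta> / (\<zeta> - w)"

lemma hz_hol: "norm \<zeta> = 1 \<Longrightarrow> hz \<zeta> holomorphic_on ball 0 1"
proof -
  assume a: "norm \<zeta> = 1"
  have "\<zeta> - w \<noteq> 0" if "w \<in> ball 0 1" for w
  proof
    assume "\<zeta> - w = 0" hence "w = \<zeta>" by simp
    with that a show False by simp
  qed
  then show ?thesis unfolding hz_def by (intro holomorphic_intros) auto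
qed

lemma hz_cont: "norm \<zeta> = 1 \<Longrightarrow> continuous_on UNIV (\<lambda>t. hz \<zeta> (circ t))"
  by (rule cont_comp_circ, rule holomorphic_on_imp_continuous_on, erule hz_hol)

lemma hz_step:
  assumes "norm \<zeta> = 1"
  shows "hz \<zeta> (circ t) * cnj (ee t) ^ Suc n = cnj (ee t) ^ Suc n + (cnj \<zeta> / 2) * (hz \<zeta> (circ t) * cnj (ee t) ^ n)"
proof -
  have z0: "\<zeta> \<noteq> 0" using assms by auto
  have cz: "cnj \<zeta> = 1 / \<zeta>" using complex_norm_square[of \<zeta>] assms z0 by (simp add: field_simps)
  have ne: "\<zeta> - circ t \<noteq> 0" using assms norm_circ[of t] by auto
  have ce: "circ t * cnj (ee t) = 1/2" using cnj_ee_mult[of t] by (simp add: circ_eq mult.commute)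
  have H: "hz \<zeta> (circ t) = 1 + (circ t / \<zeta>) * hz \<zeta> (circ t)"
    using ne z0 by (simp add: hz_def field_simps)
  have "hz \<zeta> (circ t) * cnj (ee t) ^ Suc n = (1 + (circ t / \<zeta>) * hz \<zeta> (circ t)) * cnj (ee t) ^ Suc n"
    by (rule arg_cong[where f="\<lambda>u. u * cnj (ee t) ^ Suc n", OF H])
  also have "\<dots> = cnj (ee t) ^ Suc n + (circ t * cnj (ee t)) / \<zeta> * (hz \<zeta> (circ t) * cnj (ee t) ^ n)"
    by (simp add: algebra_simps)
  finally have "hz \<zeta> (circ t) * cnj (ee t) ^ Suc n = cnj (ee t) ^ Suc n + (circ t * cnj (ee t)) / \<zeta> * (hz \<zeta> (circ t) * cnj (ee t) ^ n)" .
  thus ?thesis using ce cz by simp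
qed

lemma hz_coef:
  assumes "norm \<zeta> = 1"
  shows "integral\<^sup>L LL (\<lambda>t. hz \<zeta> (circ t) * cnj (ee t) ^ n) = (1/2) ^ n * cnj \<zeta> ^ n"
proof (induction n)
  case 0
  have "\<zeta> \<noteq> 0" using assms by auto
  then show ?case using MV[OF hz_hol[OF assms]] by (simp add: hz_def)
next
  case (Suc n)
  have ci: "continuous_on UNIV (\<lambda>t. hz \<zeta> (circ t) * cnj (ee t) ^ n)"
    by (intro continuous_intros hz_cont assms) (use cont_ee in \<open>auto intro: continuous_on_compose2[of UNIV cnj]\<close>)
  have ce: "continuous_on UNIV (\<lambda>t. cnj (ee t) ^ Suc n)"
    by (intro continuous_intros) (use cont_ee in auto)
  have "integral\<^sup>L LL (\<lambda>t. hz \<zeta> (circ t) * cnj (ee t) ^ Suc n)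
      = integral\<^sup>L LL (\<lambda>t. cnj (ee t) ^ Suc n + (cnj \<zeta> / 2) * (hz \<zeta> (circ t) * cnj (ee t) ^ n))"
    using hz_step[OF assms] by simp
  also have "\<dots> = integral\<^sup>L LL (\<lambda>t. cnj (ee t) ^ Suc n) + (cnj \<zeta> / 2) * integral\<^sup>L LL (\<lambda>t. hz \<zeta> (circ t) * cnj (ee t) ^ n)"
    using contL[OF ci] contL[OF ce] by simp
  also have "\<dots> = (1/2) ^ Suc n * cnj \<zeta> ^ Suc n"
    using int_cnj_ee_pow[of "Suc n"] Suc by simp
  finally show ?case .
qed

definition P1 :: "complex \<Rightarrow> complex \<Rightarrow> real" where
  "P1 z \<zeta> = (1 - (cmod z)\<^sup>2) / (cmod (\<zeta> - z))\<^sup>2"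

lemma P1_decomp_gen:
  assumes "norm \<zeta> = 1" "z \<noteq> \<zeta>"
  shows "complex_of_real (P1 z \<zeta>) = \<zeta> / (\<zeta> - z) + cnj \<zeta> / (cnj \<zeta> - cnj z) - 1"
proof -
  have d: "\<zeta> - z \<noteq> 0" using assms by simp
  have d': "cnj \<zeta> - cnj z \<noteq> 0" using d by (metis complex_cnj_diff complex_cnj_zero_iff)
  have n1: "\<zeta> * cnj \<zeta> = 1" using complex_norm_square[of \<zeta>] assms by simp
  have "complex_of_real (P1 z \<zeta>) = (1 - z * cnj z) / ((\<zeta> - z) * (cnj \<zeta> - cnj z))"
  proof -
    have a: "complex_of_real ((cmod z)\<^sup>2) = z * cnj z" using complex_norm_square[of z] by simp
    have b: "complex_of_real ((cmod (\<zeta> - z))\<^sup>2) = (\<zeta> - z) * (cnj \<zeta> - cnj z)"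
      using complex_norm_square[of "\<zeta> - z"] by simp
    show ?thesis unfolding P1_def of_real_divide of_real_diff of_real_1 a b ..
  qed
  also have "\<dots> = \<zeta> / (\<zeta> - z) + cnj \<zeta> / (cnj \<zeta> - cnj z) - 1"
  proof -
    have r: "\<zeta> * (cnj \<zeta> - cnj z) + cnj \<zeta> * (\<zeta> - z) - (\<zeta> - z) * (cnj \<zeta> - cnj z) = \<zeta> * cnj \<zeta> - z * cnj z"
      by (simp add: algebra_simps)
    have "\<zeta> / (\<zeta> - z) + cnj \<zeta> / (cnj \<zeta> - cnj z) - 1 =
      (\<zeta> * (cnj \<zeta> - cnj z) + cnj \<zeta> * (\<zeta> - z) - (\<zeta> - z) * (cnj \<zeta> - cnj z)) / ((\<zeta> - z) * (cnj \<zeta> - cnj z))"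
    proof -
      have g: "\<And>a b A B::complex. A \<noteq> 0 \<Longrightarrow> B \<noteq> 0 \<Longrightarrow> a/A + b/B - 1 = (a*B + b*A - A*B)/(A*B)"
        by (simp add: field_simps)
      show ?thesis by (rule g[OF d d'])
    qed
    also have "\<dots> = (1 - z * cnj z) / ((\<zeta> - z) * (cnj \<zeta> - cnj z))" unfolding r n1 ..
    finally show ?thesis by simp
  qed
  finally show ?thesis .
qed

lemma P1_decomp:
  assumes "norm \<zeta> = 1"
  shows "complex_of_real (P1 (circ t) \<zeta>) = hz \<zeta> (circ t) + cnj (hz \<zeta> (circ t)) - 1"
proof -
  have "circ t \<noteq> \<zeta>" using assms norm_circ[of t] by auto
  thus ?thesis using P1_decomp_gen[OF assms] by (simp add: hz_def)
qed

lemma cont_cnj_ee: "continuous_on UNIV (\<lambda>t. cnj (ee t))"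
  using cont_ee by (intro continuous_intros)

lemma Pcoef1:
  assumes z: "norm \<zeta> = 1" and n: "n \<ge> 1"
  shows "integral\<^sup>L LL (\<lambda>t. complex_of_real (P1 (circ t) \<zeta>) * cnj (ee t) ^ n) = (1/2) ^ n * cnj \<zeta> ^ n"
proof -
  have eq: "complex_of_real (P1 (circ t) \<zeta>) * cnj (ee t) ^ n =
     hz \<zeta> (circ t) * cnj (ee t) ^ n + cnj (hz \<zeta> (circ t) * ee t ^ n) - cnj (ee t) ^ n" for t
    unfolding P1_decomp[OF z, of t] by (simp add: algebra_simps)
  have c1: "continuous_on UNIV (\<lambda>t. hz \<zeta> (circ t) * cnj (ee t) ^ n)"
    by (intro continuous_intros hz_cont z cont_cnj_ee)
  have c2: "continuous_on UNIV (\<lambda>t. cnj (hz \<zeta> (circ t) * ee t ^ n))"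
    by (intro continuous_intros hz_cont z cont_ee)
  have c3: "continuous_on UNIV (\<lambda>t. cnj (ee t) ^ n)"
    by (intro continuous_intros cont_cnj_ee)
  have "integral\<^sup>L LL (\<lambda>t. complex_of_real (P1 (circ t) \<zeta>) * cnj (ee t) ^ n) =
     integral\<^sup>L LL (\<lambda>t. hz \<zeta> (circ t) * cnj (ee t) ^ n) + integral\<^sup>L LL (\<lambda>t. cnj (hz \<zeta> (circ t) * ee t ^ n))
      - integral\<^sup>L LL (\<lambda>t. cnj (ee t) ^ n)"
    unfolding eq using contL[OF c1] contL[OF c2] contL[OF c3]
    by (simp add: Bochner_Integration.integral_diff Bochner_Integration.integral_add del: Bochner_Integration.integral_cnj)
  also have "\<dots> = (1/2) ^ n * cnj \<zeta> ^ n"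
  proof -
    have "integral\<^sup>L LL (\<lambda>t. cnj (hz \<zeta> (circ t) * ee t ^ n)) = 0"
      using Bochner_Integration.integral_cnj[of LL "\<lambda>t. hz \<zeta> (circ t) * ee t ^ n"] MVpos[OF hz_hol[OF z] n]
      by (simp del: complex_cnj_mult complex_cnj_power)
    thus ?thesis using hz_coef[OF z, of n] int_cnj_ee_pow[OF n] by (simp del: complex_cnj_mult complex_cnj_power)
  qed
  finally show ?thesis .
qed

lemma Pcoef2:
  assumes z: "norm \<zeta> = 1" and n: "n \<ge> 1"
  shows "integral\<^sup>L LL (\<lambda>t. complex_of_real (P1 (circ t) \<zeta>) * ee t ^ n) = (1/2) ^ n * \<zeta> ^ n"
proof -
  have "integral\<^sup>L LL (\<lambda>t. complex_of_real (P1 (circ t) \<zeta>) * ee t ^ n)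
    = integral\<^sup>L LL (\<lambda>t. cnj (complex_of_real (P1 (circ t) \<zeta>) * cnj (ee t) ^ n))" by simp
  also have "\<dots> = cnj ((1/2) ^ n * cnj \<zeta> ^ n)"
    by (subst Bochner_Integration.integral_cnj) (simp only: Pcoef1[OF z n])
  also have "\<dots> = (1/2) ^ n * \<zeta> ^ n" by simp
  finally show ?thesis .
qed

lemma sf_LL: "sigma_finite_measure LL" using finite_LL unfolding finite_measure_def by blast
lemma psf_LL: "pair_sigma_finite LL LL" unfolding pair_sigma_finite_def using sf_LL by blast
lemma finite_LL2: "finite_measure (LL \<Otimes>\<^sub>M LL)" by (intro finite_measure_pair_measure finite_LL)
lemma sets_LL2[simp, measurable_cong]: "sets (LL \<Otimes>\<^sub>M LL) = sets borel"
proof -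
  have "sets (LL \<Otimes>\<^sub>M LL) = sets ((borel::real measure) \<Otimes>\<^sub>M (borel::real measure))"
    by (intro sets_pair_measure_cong) simp_all
  also have "\<dots> = sets (borel :: (real \<times> real) measure)" by (rule arg_cong[OF borel_prod])
  finally show ?thesis .
qed

lemma int2:
  fixes F :: "real \<times> real \<Rightarrow> complex"
  assumes "continuous_on UNIV F" "\<And>x. norm (F x) \<le> B"
  shows "integrable (LL \<Otimes>\<^sub>M LL) F"
proof -
  interpret finite_measure "LL \<Otimes>\<^sub>M LL" by (rule finite_LL2)
  have m: "F \<in> borel_measurable borel" using assms(1) by (rule borel_measurable_continuous_onI)
  hence "F \<in> borel_measurable (LL \<Otimes>\<^sub>M LL)" by (simp add: measurable_cong_sets[OF sets_LL2 refl])
  thus ?thesis by (intro integrable_const_bound[where B=B]) (auto simp: assms(2))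
qed

lemma int1:
  fixes F :: "real \<Rightarrow> complex"
  assumes "\<And>x. norm (F x) \<le> B" "F \<in> borel_measurable borel"
  shows "integrable LL F"
proof -
  interpret finite_measure LL by (rule finite_LL)
  have "F \<in> borel_measurable LL" using assms(2) by (simp add: measurable_cong_sets[OF sets_LL refl])
  thus ?thesis by (intro integrable_const_bound[where B=B]) (auto simp: assms(1))
qed

lemma P1_bound:
  assumes "norm \<zeta> = 1" "norm z = 1/2"
  shows "0 \<le> P1 z \<zeta>" "P1 z \<zeta> \<le> 3"
proof -
  have d: "cmod (\<zeta> - z) \<ge> 1/2" using norm_triangle_ineq2[of \<zeta> z] assms by simp
  hence d2: "(cmod (\<zeta> - z))\<^sup>2 \<ge> 1/4"
    by (metis power2_eq_square mult_mono norm_ge_zero order_trans zero_le_divide_iff zero_le_one zero_le_numeral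
        times_divide_times_eq mult_1 num_double numeral_times_numeral power2_eq_square[of "1/2::real"] power_mono[of "1/2" "cmod (\<zeta> - z)" 2] one_power2 power_divide)
  have n: "1 - (cmod z)\<^sup>2 = 3/4" unfolding assms(2) by (simp add: power2_eq_square)
  show "0 \<le> P1 z \<zeta>" unfolding P1_def n by simp
  have "3/4 / (cmod (\<zeta> - z))\<^sup>2 \<le> 3/4 / (1/4)"
    using d2 by (intro divide_left_mono) auto
  thus "P1 z \<zeta> \<le> 3" unfolding P1_def n by simp
qed

lemma P1_cont:
  assumes "norm \<zeta> = 1"
  shows "continuous_on UNIV (\<lambda>t. P1 (circ t) \<zeta>)"
proof -
  have nz: "\<And>t. (cmod (\<zeta> - circ t))\<^sup>2 \<noteq> 0"
  proof
    fix t assume "(cmod (\<zeta> - circ t))\<^sup>2 = 0"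
    hence "\<zeta> = circ t" by simp
    thus False using assms norm_circ[of t] by simp
  qed
  show ?thesis unfolding P1_def by (intro continuous_intros cont_circ) (use nz in blast)
qed

lemma norm_cnj_ee_pow[simp]: "norm (cnj (ee t) ^ n) = 1" by (simp add: norm_power)
lemma norm_ee_pow[simp]: "norm (ee t ^ n) = 1" by (simp add: norm_power)

lemma coef2:
  assumes a: "norm a = 1" and b: "norm b = 1" and n: "n \<ge> 1" and m: "m \<ge> 1"
  shows "integral\<^sup>L (LL \<Otimes>\<^sub>M LL) (\<lambda>x. complex_of_real (P1 (circ (fst x)) a * P1 (circ (snd x)) b) * (cnj (ee (fst x)) ^ n * ee (snd x) ^ m))
     = ((1/2) ^ n * cnj a ^ n) * ((1/2) ^ m * b ^ m)"
proof -
  define A where "A s = complex_of_real (P1 (circ s) a) * cnj (ee s) ^ n" for s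
  define B where "B t = complex_of_real (P1 (circ t) b) * ee t ^ m" for t
  have eq: "(\<lambda>x. complex_of_real (P1 (circ (fst x)) a * P1 (circ (snd x)) b) * (cnj (ee (fst x)) ^ n * ee (snd x) ^ m))
     = (\<lambda>x. A (fst x) * B (snd x))" by (auto simp: A_def B_def fun_eq_iff)
  have cA: "continuous_on UNIV A" unfolding A_def
    by (intro continuous_intros P1_cont a cont_cnj_ee)
  have cB: "continuous_on UNIV B" unfolding B_def
    by (intro continuous_intros P1_cont b cont_ee)
  have bA: "norm (A s) \<le> 3" for s using P1_bound[OF a norm_circ[of s]] by (simp add: A_def norm_mult)
  have bB: "norm (B s) \<le> 3" for s using P1_bound[OF b norm_circ[of s]] by (simp add: B_def norm_mult)
  have i2: "integrable (LL \<Otimes>\<^sub>M LL) (\<lambda>x. A (fst x) * B (snd x))"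
  proof (rule int2[where B=9])
    show "continuous_on UNIV (\<lambda>x. A (fst x) * B (snd x))"
      by (intro continuous_intros continuous_on_compose2[OF cA] continuous_on_compose2[OF cB]) auto
    fix x :: "real \<times> real"
    have "norm (A (fst x) * B (snd x)) \<le> 3 * 3" unfolding norm_mult
      by (intro mult_mono bA bB) auto
    thus "norm (A (fst x) * B (snd x)) \<le> 9" by simp
  qed
  have "integral\<^sup>L (LL \<Otimes>\<^sub>M LL) (\<lambda>x. A (fst x) * B (snd x)) = (\<integral>s. (\<integral>t. A s * B t \<partial>LL) \<partial>LL)"
    using pair_sigma_finite.integral_fst'[OF psf_LL i2] by simp
  also have "\<dots> = (\<integral>s. A s * integral\<^sup>L LL B \<partial>LL)"
    using contL[OF cB] by simp
  also have "\<dots> = integral\<^sup>L LL A * integral\<^sup>L LL B"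
    using contL[OF cA] by simp
  also have "\<dots> = ((1/2) ^ n * cnj a ^ n) * ((1/2) ^ m * b ^ m)"
    unfolding A_def B_def using Pcoef1[OF a n] Pcoef2[OF b m] by simp
  finally show ?thesis unfolding eq .
qed

lemma hol_slice:
  assumes hol: "holomorphic2_on f bidisc" and a: "norm a < 1"
  shows "(\<lambda>w. f (a, w)) holomorphic_on ball 0 1" "(\<lambda>w. f (w, a)) holomorphic_on ball 0 1"
proof -
  show "(\<lambda>w. f (a, w)) holomorphic_on ball 0 1" unfolding holomorphic_on_def
  proof
    fix w :: complex assume "w \<in> ball 0 1"
    hence "(a, w) \<in> bidisc" using a by (simp add: bidisc_def)
    then obtain L where d: "(f has_derivative L) (at (a, w))" and lin: "\<forall>c x y. L (c * x, c * y) = c * L (x, y)"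
      using hol unfolding holomorphic2_on_def by blast
    have p: "((\<lambda>w. (a, w)) has_derivative (\<lambda>h. (0, h))) (at w)"
      by (intro derivative_eq_intros) auto
    have "((\<lambda>w. f (a, w)) has_derivative (\<lambda>h. L (0, h))) (at w)"
      using has_derivative_compose[OF p d] by simp
    moreover have "(\<lambda>h. L (0, h)) = (\<lambda>h. L (0, 1) * h)"
    proof
      fix h :: complex show "L (0, h) = L (0, 1) * h" using lin[rule_format, of h 0 1] by (simp add: mult.commute)
    qed
    ultimately have "((\<lambda>w. f (a, w)) has_field_derivative L (0, 1)) (at w)"
      by (simp add: has_field_derivative_def)
    thus "(\<lambda>w. f (a, w)) field_differentiable at w within ball 0 1"
      using field_differentiable_def has_field_derivative_at_within by blast
  qed
  show "(\<lambda>w. f (w, a)) holomorphic_on ball 0 1" unfolding holomorphic_on_def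
  proof
    fix w :: complex assume "w \<in> ball 0 1"
    hence "(w, a) \<in> bidisc" using a by (simp add: bidisc_def)
    then obtain L where d: "(f has_derivative L) (at (w, a))" and lin: "\<forall>c x y. L (c * x, c * y) = c * L (x, y)"
      using hol unfolding holomorphic2_on_def by blast
    have p: "((\<lambda>w. (w, a)) has_derivative (\<lambda>h. (h, 0))) (at w)"
      by (intro derivative_eq_intros) auto
    have "((\<lambda>w. f (w, a)) has_derivative (\<lambda>h. L (h, 0))) (at w)"
      using has_derivative_compose[OF p d] by simp
    moreover have "(\<lambda>h. L (h, 0)) = (\<lambda>h. L (1, 0) * h)"
    proof
      fix h :: complex show "L (h, 0) = L (1, 0) * h" using lin[rule_format, of h 1 0] by (simp add: mult.commute)
    qed
    ultimately have "((\<lambda>w. f (w, a)) has_field_derivative L (1, 0)) (at w)"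
      by (simp add: has_field_derivative_def)
    thus "(\<lambda>w. f (w, a)) field_differentiable at w within ball 0 1"
      using field_differentiable_def has_field_derivative_at_within by blast
  qed
qed

lemma hol_cont:
  assumes hol: "holomorphic2_on f bidisc"
  shows "continuous_on bidisc f"
proof (rule continuous_at_imp_continuous_on, rule ballI)
  fix z assume "z \<in> bidisc"
  then obtain L where "(f has_derivative L) (at z)" using hol unfolding holomorphic2_on_def by blast
  thus "isCont f z" by (rule has_derivative_continuous)
qed

lemma f_circ_facts:
  assumes hol: "holomorphic2_on f bidisc"
  shows "continuous_on UNIV (\<lambda>x::real\<times>real. f (circ (fst x), circ (snd x)))"
    "\<exists>B. \<forall>x::real\<times>real. norm (f (circ (fst x), circ (snd x))) \<le> B"
proof -
  have fc: "continuous_on bidisc f" by (rule hol_cont[OF hol])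
  have pc: "continuous_on UNIV (\<lambda>x::real\<times>real. (circ (fst x), circ (snd x)))"
    by (intro continuous_intros continuous_on_compose2[OF cont_circ]) auto
  show "continuous_on UNIV (\<lambda>x::real\<times>real. f (circ (fst x), circ (snd x)))"
    by (rule continuous_on_compose2[OF fc pc]) (auto simp: bidisc_def)
  define K where "K = sphere (0::complex) (1/2) \<times> sphere (0::complex) (1/2)"
  have "compact K" unfolding K_def by (intro compact_Times compact_sphere)
  moreover have "continuous_on K f" by (rule continuous_on_subset[OF fc]) (auto simp: K_def bidisc_def)
  ultimately have "compact (f ` K)" using compact_continuous_image by blast
  then obtain B where B: "\<forall>y\<in>f ` K. norm y \<le> B" using compact_imp_bounded bounded_iff by metis
  have "norm (f (circ (fst x), circ (snd x))) \<le> B" for x :: "real \<times> real"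
    using B by (auto simp: K_def)
  thus "\<exists>B. \<forall>x::real\<times>real. norm (f (circ (fst x), circ (snd x))) \<le> B" by blast
qed

lemma holo2:
  assumes hol: "holomorphic2_on f bidisc" and n: "n \<ge> 1" and m: "m \<ge> 1"
  shows "integral\<^sup>L (LL \<Otimes>\<^sub>M LL) (\<lambda>x. f (circ (fst x), circ (snd x)) * (cnj (ee (fst x)) ^ n * ee (snd x) ^ m)) = 0"
    "integral\<^sup>L (LL \<Otimes>\<^sub>M LL) (\<lambda>x. cnj (f (circ (fst x), circ (snd x))) * (cnj (ee (fst x)) ^ n * ee (snd x) ^ m)) = 0"
proof -
  note fc = f_circ_facts(1)[OF hol]
  obtain B where B: "\<And>x. norm (f (circ (fst x), circ (snd x))) \<le> B" using f_circ_facts(2)[OF hol] by blast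
  have cT: "continuous_on UNIV (\<lambda>x::real\<times>real. cnj (ee (fst x)) ^ n * ee (snd x) ^ m)"
    by (intro continuous_intros continuous_on_compose2[OF cont_cnj_ee] continuous_on_compose2[OF cont_ee]) auto
  have i1: "integrable (LL \<Otimes>\<^sub>M LL) (\<lambda>x. f (circ (fst x), circ (snd x)) * (cnj (ee (fst x)) ^ n * ee (snd x) ^ m))"
    by (rule int2[where B=B]) (intro continuous_intros fc cT, simp add: norm_mult B)
  have i2: "integrable (LL \<Otimes>\<^sub>M LL) (\<lambda>x. cnj (f (circ (fst x), circ (snd x))) * (cnj (ee (fst x)) ^ n * ee (snd x) ^ m))"
    by (rule int2[where B=B]) (intro continuous_intros fc cT, simp add: norm_mult B)
  have cs: "continuous_on UNIV (\<lambda>t. f (circ s, circ t))" for s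
  proof -
    have "continuous_on UNIV (Pair s)" by (intro continuous_intros)
    from continuous_on_compose2[OF fc this] show ?thesis by simp
  qed
  have ct: "continuous_on UNIV (\<lambda>s. f (circ s, circ t))" for t
  proof -
    have "continuous_on UNIV (\<lambda>s::real. (s, t))" by (intro continuous_intros)
    from continuous_on_compose2[OF fc this] show ?thesis by simp
  qed
  have "integral\<^sup>L (LL \<Otimes>\<^sub>M LL) (\<lambda>x. f (circ (fst x), circ (snd x)) * (cnj (ee (fst x)) ^ n * ee (snd x) ^ m))
     = (\<integral>s. (\<integral>t. f (circ s, circ t) * (cnj (ee s) ^ n * ee t ^ m) \<partial>LL) \<partial>LL)"
    using pair_sigma_finite.integral_fst'[OF psf_LL i1] by simp
  also have "\<dots> = (\<integral>s. cnj (ee s) ^ n * (\<integral>t. f (circ s, circ t) * ee t ^ m \<partial>LL) \<partial>LL)"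
  proof (rule Bochner_Integration.integral_cong[OF refl])
    fix s
    have "(\<lambda>t. f (circ s, circ t) * (cnj (ee s) ^ n * ee t ^ m)) = (\<lambda>t. cnj (ee s) ^ n * (f (circ s, circ t) * ee t ^ m))"
      by (simp add: algebra_simps)
    moreover have "integrable LL (\<lambda>t. f (circ s, circ t) * ee t ^ m)"
      by (rule contL) (intro continuous_intros cs cont_ee)
    ultimately show "(\<integral>t. f (circ s, circ t) * (cnj (ee s) ^ n * ee t ^ m) \<partial>LL) = cnj (ee s) ^ n * (\<integral>t. f (circ s, circ t) * ee t ^ m \<partial>LL)"
      by simp
  qed
  also have "\<dots> = 0"
  proof -
    have "(\<integral>t. f (circ s, circ t) * ee t ^ m \<partial>LL) = 0" for s
      using MVpos[OF hol_slice(1)[OF hol, of "circ s"] m] by simp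
    thus ?thesis by simp
  qed
  finally show "integral\<^sup>L (LL \<Otimes>\<^sub>M LL) (\<lambda>x. f (circ (fst x), circ (snd x)) * (cnj (ee (fst x)) ^ n * ee (snd x) ^ m)) = 0" .
  have "integral\<^sup>L (LL \<Otimes>\<^sub>M LL) (\<lambda>x. cnj (f (circ (fst x), circ (snd x))) * (cnj (ee (fst x)) ^ n * ee (snd x) ^ m))
     = (\<integral>t. (\<integral>s. cnj (f (circ s, circ t)) * (cnj (ee s) ^ n * ee t ^ m) \<partial>LL) \<partial>LL)"
    using pair_sigma_finite.integral_snd[OF psf_LL, of "\<lambda>s t. cnj (f (circ s, circ t)) * (cnj (ee s) ^ n * ee t ^ m)"] i2
    by (simp add: case_prod_beta')
  also have "\<dots> = (\<integral>t. ee t ^ m * cnj (\<integral>s. f (circ s, circ t) * ee s ^ n \<partial>LL) \<partial>LL)"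
  proof (rule Bochner_Integration.integral_cong[OF refl])
    fix t
    have "(\<lambda>s. cnj (f (circ s, circ t)) * (cnj (ee s) ^ n * ee t ^ m)) = (\<lambda>s. ee t ^ m * cnj (f (circ s, circ t) * ee s ^ n))"
      by (simp add: algebra_simps)
    moreover have "integrable LL (\<lambda>s. cnj (f (circ s, circ t) * ee s ^ n))"
      by (rule contL) (intro continuous_intros ct cont_ee)
    ultimately show "(\<integral>s. cnj (f (circ s, circ t)) * (cnj (ee s) ^ n * ee t ^ m) \<partial>LL) = ee t ^ m * cnj (\<integral>s. f (circ s, circ t) * ee s ^ n \<partial>LL)"
      by (simp del: complex_cnj_mult complex_cnj_power)
  qed
  also have "\<dots> = 0"
  proof -
    have "(\<integral>s. f (circ s, circ t) * ee s ^ n \<partial>LL) = 0" for t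
      using MVpos[OF hol_slice(2)[OF hol, of "circ t"] n] by simp
    thus ?thesis by simp
  qed
  finally show "integral\<^sup>L (LL \<Otimes>\<^sub>M LL) (\<lambda>x. cnj (f (circ (fst x), circ (snd x))) * (cnj (ee (fst x)) ^ n * ee (snd x) ^ m)) = 0" .
qed

lemma supp_AE:
  assumes sM: "sets M = sets borel"
  shows "AE x in M. x \<in> measure_support M"
proof -
  define F where "F = {U :: (complex \<times> complex) set. open U \<and> emeasure M U = 0}"
  obtain F' where F': "F' \<subseteq> F" "countable F'" "\<Union>F' = \<Union>F"
    using Lindelof[of F] unfolding F_def by blast
  have "(\<Union>U\<in>F'. U) \<in> null_sets M"
  proof (rule null_sets_UN'[OF F'(2)])
    fix U assume "U \<in> F'"
    hence "open U" "emeasure M U = 0" using F'(1) by (auto simp: F_def)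
    thus "U \<in> null_sets M" using sM by (auto simp: null_sets_def)
  qed
  moreover have "{x \<in> space M. x \<notin> measure_support M} \<subseteq> (\<Union>U\<in>F'. U)"
  proof
    fix x assume "x \<in> {x \<in> space M. x \<notin> measure_support M}"
    then obtain U where "open U" "x \<in> U" "emeasure M U = 0" by (auto simp: measure_support_def)
    hence "x \<in> \<Union>F" by (auto simp: F_def)
    thus "x \<in> (\<Union>U\<in>F'. U)" using F'(3) by auto
  qed
  ultimately show ?thesis by (rule AE_I')
qed

lemma closed_torus2: "closed torus2"
proof -
  have "torus2 = (\<lambda>z. (cmod (fst z), cmod (snd z))) -` {(1,1)}" by (auto simp: torus2_def)
  moreover have "continuous_on UNIV (\<lambda>z::complex\<times>complex. (cmod (fst z), cmod (snd z)))"
    by (intro continuous_intros)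
  ultimately show ?thesis using closed_vimage[of "{(1::real,1::real)}"] by (metis closed_singleton)
qed

lemma torus2_borel[measurable]: "torus2 \<in> sets borel"
  using closed_torus2 by (rule borel_closed)

lemma torus_AE:
  assumes "pos_RP_measure M"
  shows "AE x in M. x \<in> torus2"
proof -
  have sM: "sets M = sets borel" and z: "emeasure M (- torus2) = 0" using assms by (auto simp: pos_RP_measure_def)
  have "- torus2 \<in> null_sets M" using z sM torus2_borel by (auto simp: null_sets_def)
  moreover have "{x \<in> space M. x \<notin> torus2} \<subseteq> - torus2" by auto
  ultimately show ?thesis by (rule AE_I')
qed

lemma circ_meas[measurable]: "circ \<in> borel_measurable borel"
  by (rule borel_measurable_continuous_onI[OF cont_circ])
lemma ee_meas[measurable]: "ee \<in> borel_measurable borel"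
  by (rule borel_measurable_continuous_onI[OF cont_ee])

lemma coef_zero:
  assumes RP: "pos_RP_measure M" and n: "n \<ge> 1" and m: "m \<ge> 1"
  shows "integral\<^sup>L M (\<lambda>\<zeta>. cnj (fst \<zeta>) ^ n * snd \<zeta> ^ m) = 0"
proof -
  obtain f where hol: "holomorphic2_on f bidisc" and pf: "\<And>z. z \<in> bidisc \<Longrightarrow> poisson_integral2 M z = Re (f z)"
    using RP unfolding pos_RP_measure_def by blast
  have sM[measurable_cong]: "sets M = sets borel" and fM: "finite_measure M" using RP by (auto simp: pos_RP_measure_def)
  interpret M: finite_measure M by (rule fM)
  note tAE = torus_AE[OF RP]
  define T where "T x = cnj (ee (fst x)) ^ n * ee (snd x) ^ m" for x :: "real \<times> real"
  define Q where "Q \<zeta> x = indicator torus2 \<zeta> * poisson_kernel2 (circ (fst x), circ (snd x)) \<zeta>" for \<zeta> x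
  define K where "K \<zeta> x = complex_of_real (Q \<zeta> x) * T x" for \<zeta> x
  have Qeq: "Q \<zeta> x = P1 (circ (fst x)) (fst \<zeta>) * P1 (circ (snd x)) (snd \<zeta>)" if "\<zeta> \<in> torus2" for \<zeta> x
    using that by (simp add: Q_def poisson_kernel2_def P1_def)
  have Qb: "norm (Q \<zeta> x) \<le> 9" for \<zeta> x
  proof (cases "\<zeta> \<in> torus2")
    case True
    hence a: "norm (fst \<zeta>) = 1" "norm (snd \<zeta>) = 1" by (auto simp: torus2_def)
    note b1 = P1_bound[OF a(1) norm_circ[of "fst x"]] and b2 = P1_bound[OF a(2) norm_circ[of "snd x"]]
    have "P1 (circ (fst x)) (fst \<zeta>) * P1 (circ (snd x)) (snd \<zeta>) \<le> 3 * 3"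
      by (intro mult_mono b1 b2) auto
    moreover have "0 \<le> P1 (circ (fst x)) (fst \<zeta>) * P1 (circ (snd x)) (snd \<zeta>)"
      using b1 b2 by simp
    ultimately show ?thesis using Qeq[OF True] by simp
  next
    case False thus ?thesis by (simp add: Q_def)
  qed
  have normT: "norm (T x) = 1" for x by (simp add: T_def norm_mult)
  have Kb: "norm (K \<zeta> x) \<le> 9" for \<zeta> x using Qb[of \<zeta> x] by (simp add: K_def norm_mult normT)
  have mQ: "(\<lambda>p. Q (fst p) (snd p)) \<in> borel_measurable borel"
  proof -
    have cc: "continuous_on UNIV (\<lambda>p::((complex\<times>complex)\<times>(real\<times>real)). circ (fst (snd p)))"
      "continuous_on UNIV (\<lambda>p::((complex\<times>complex)\<times>(real\<times>real)). circ (snd (snd p)))"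
      by (intro continuous_intros continuous_on_compose2[OF cont_circ], auto)+
    have m1: "(\<lambda>p::((complex\<times>complex)\<times>(real\<times>real)). 1 - (cmod (circ (fst (snd p))))\<^sup>2) \<in> borel_measurable borel"
      by (rule borel_measurable_continuous_onI) (intro continuous_intros cc)
    have m2: "(\<lambda>p::((complex\<times>complex)\<times>(real\<times>real)). 1 - (cmod (circ (snd (snd p))))\<^sup>2) \<in> borel_measurable borel"
      by (rule borel_measurable_continuous_onI) (intro continuous_intros cc)
    have m3: "(\<lambda>p::((complex\<times>complex)\<times>(real\<times>real)). (cmod (fst (fst p) - circ (fst (snd p))))\<^sup>2) \<in> borel_measurable borel"
      by (rule borel_measurable_continuous_onI) (intro continuous_intros cc)
    have m4: "(\<lambda>p::((complex\<times>complex)\<times>(real\<times>real)). (cmod (snd (fst p) - circ (snd (snd p))))\<^sup>2) \<in> borel_measurable borel"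
      by (rule borel_measurable_continuous_onI) (intro continuous_intros cc)
    have mf: "(\<lambda>p::((complex\<times>complex)\<times>(real\<times>real)). fst p) \<in> borel \<rightarrow>\<^sub>M borel"
      by (rule borel_measurable_continuous_onI) (intro continuous_intros)
    have mi: "(\<lambda>p::((complex\<times>complex)\<times>(real\<times>real)). indicator torus2 (fst p) :: real) \<in> borel_measurable borel"
      using measurable_compose[OF mf borel_measurable_indicator[OF torus2_borel]] by simp
    have "(\<lambda>p. indicator torus2 (fst p) * ((1 - (cmod (circ (fst (snd p))))\<^sup>2) / (cmod (fst (fst p) - circ (fst (snd p))))\<^sup>2 *
        ((1 - (cmod (circ (snd (snd p))))\<^sup>2) / (cmod (snd (fst p) - circ (snd (snd p))))\<^sup>2)))
        \<in> borel_measurable borel"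
      by (intro borel_measurable_times borel_measurable_divide mi m1 m2 m3 m4)
    thus ?thesis unfolding Q_def poisson_kernel2_def by simp
  qed
  have mK: "(\<lambda>p. K (fst p) (snd p)) \<in> borel_measurable borel"
  proof -
    have mT: "(\<lambda>p::((complex\<times>complex)\<times>(real\<times>real)). T (snd p)) \<in> borel_measurable borel"
      unfolding T_def by (rule borel_measurable_continuous_onI)
        (intro continuous_intros continuous_on_compose2[OF cont_cnj_ee] continuous_on_compose2[OF cont_ee], auto)
    have "(\<lambda>p. complex_of_real (Q (fst p) (snd p)) * T (snd p)) \<in> borel_measurable borel"
      by (intro borel_measurable_times mT measurable_compose[OF mQ borel_measurable_of_real])
    thus ?thesis unfolding K_def by simp
  qed
  have sP: "sets (M \<Otimes>\<^sub>M (LL \<Otimes>\<^sub>M LL)) = sets (borel :: ((complex \<times> complex) \<times> (real \<times> real)) measure)"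
  proof -
    have "sets (M \<Otimes>\<^sub>M (LL \<Otimes>\<^sub>M LL)) = sets ((borel :: (complex \<times> complex) measure) \<Otimes>\<^sub>M (borel :: (real \<times> real) measure))"
      by (intro sets_pair_measure_cong sM sets_LL2)
    also have "\<dots> = sets (borel :: ((complex \<times> complex) \<times> (real \<times> real)) measure)" by (rule arg_cong[OF borel_prod])
    finally show ?thesis .
  qed
  interpret P: pair_sigma_finite M "LL \<Otimes>\<^sub>M LL"
    unfolding pair_sigma_finite_def using fM finite_LL2 unfolding finite_measure_def by blast
  interpret PF: finite_measure "M \<Otimes>\<^sub>M (LL \<Otimes>\<^sub>M LL)" by (intro finite_measure_pair_measure fM finite_LL2)
  have iK: "integrable (M \<Otimes>\<^sub>M (LL \<Otimes>\<^sub>M LL)) (case_prod K)"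
  proof (rule PF.integrable_const_bound[where B=9])
    show "AE x in M \<Otimes>\<^sub>M (LL \<Otimes>\<^sub>M LL). norm (case_prod K x) \<le> 9" using Kb by (auto simp: case_prod_beta)
    have "case_prod K = (\<lambda>p. K (fst p) (snd p))" by (simp add: case_prod_beta' )
    hence "case_prod K \<in> borel_measurable borel" using mK by simp
    thus "case_prod K \<in> borel_measurable (M \<Otimes>\<^sub>M (LL \<Otimes>\<^sub>M LL))"
      using measurable_cong_sets[OF sP refl, of borel] by blast
  qed
  have Fub: "(\<integral>x. (\<integral>\<zeta>. K \<zeta> x \<partial>M) \<partial>(LL \<Otimes>\<^sub>M LL)) = (\<integral>\<zeta>. (\<integral>x. K \<zeta> x \<partial>(LL \<Otimes>\<^sub>M LL)) \<partial>M)"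
    by (rule P.Fubini_integral[OF iK])
  have inner1: "(\<integral>\<zeta>. K \<zeta> x \<partial>M) = complex_of_real (Re (f (circ (fst x), circ (snd x)))) * T x" for x
  proof -
    have mQx: "(\<lambda>\<zeta>. Q \<zeta> x) \<in> borel_measurable M"
    proof -
      have "(\<lambda>\<zeta>::complex\<times>complex. (\<zeta>, x)) \<in> borel \<rightarrow>\<^sub>M borel"
        by (rule borel_measurable_continuous_onI) (intro continuous_intros)
      from measurable_compose[OF this mQ] show ?thesis by (simp add: measurable_cong_sets[OF sM refl])
    qed
    have iQ: "integrable M (\<lambda>\<zeta>. Q \<zeta> x)"
      by (rule M.integrable_const_bound[where B=9]) (use Qb mQx in auto)
    have "(\<integral>\<zeta>. K \<zeta> x \<partial>M) = complex_of_real (\<integral>\<zeta>. Q \<zeta> x \<partial>M) * T x"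
      unfolding K_def using iQ by simp
    also have "(\<integral>\<zeta>. Q \<zeta> x \<partial>M) = poisson_integral2 M (circ (fst x), circ (snd x))"
      unfolding poisson_integral2_def
    proof (rule integral_cong_AE)
      show "(\<lambda>\<zeta>. Q \<zeta> x) \<in> borel_measurable M" by (rule mQx)
      show "(\<lambda>\<zeta>. poisson_kernel2 (circ (fst x), circ (snd x)) \<zeta>) \<in> borel_measurable M"
      proof -
        have "(\<lambda>\<zeta>. poisson_kernel2 (circ (fst x), circ (snd x)) \<zeta>) \<in> borel_measurable borel"
          unfolding poisson_kernel2_def
          by (intro borel_measurable_times borel_measurable_divide borel_measurable_continuous_onI continuous_intros)
        thus ?thesis by (simp add: measurable_cong_sets[OF sM refl])
      qed
      show "AE \<zeta> in M. Q \<zeta> x = poisson_kernel2 (circ (fst x), circ (snd x)) \<zeta>"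
        using tAE by eventually_elim (simp add: Q_def)
    qed
    also have "\<dots> = Re (f (circ (fst x), circ (snd x)))" by (rule pf) (simp add: bidisc_def)
    finally show ?thesis .
  qed
  have LHS: "(\<integral>x. (\<integral>\<zeta>. K \<zeta> x \<partial>M) \<partial>(LL \<Otimes>\<^sub>M LL)) = 0"
  proof -
    note fc = f_circ_facts(1)[OF hol]
    obtain B where B: "\<And>x. norm (f (circ (fst x), circ (snd x))) \<le> B" using f_circ_facts(2)[OF hol] by blast
    have cT: "continuous_on UNIV T" unfolding T_def
      by (intro continuous_intros continuous_on_compose2[OF cont_cnj_ee] continuous_on_compose2[OF cont_ee]) auto
    have i1: "integrable (LL \<Otimes>\<^sub>M LL) (\<lambda>x. f (circ (fst x), circ (snd x)) * T x)"
      by (rule int2[where B=B]) (intro continuous_intros fc cT, simp add: norm_mult B normT)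
    have i2: "integrable (LL \<Otimes>\<^sub>M LL) (\<lambda>x. cnj (f (circ (fst x), circ (snd x))) * T x)"
      by (rule int2[where B=B]) (intro continuous_intros fc cT, simp add: norm_mult B normT)
    have "(\<integral>x. (\<integral>\<zeta>. K \<zeta> x \<partial>M) \<partial>(LL \<Otimes>\<^sub>M LL))
       = (\<integral>x. (f (circ (fst x), circ (snd x)) * T x + cnj (f (circ (fst x), circ (snd x))) * T x) / 2 \<partial>(LL \<Otimes>\<^sub>M LL))"
    proof (rule Bochner_Integration.integral_cong[OF refl])
      fix x
      have "complex_of_real (Re (f (circ (fst x), circ (snd x)))) = (f (circ (fst x), circ (snd x)) + cnj (f (circ (fst x), circ (snd x)))) / 2"
        unfolding complex_add_cnj by simp
      thus "(\<integral>\<zeta>. K \<zeta> x \<partial>M) = (f (circ (fst x), circ (snd x)) * T x + cnj (f (circ (fst x), circ (snd x))) * T x) / 2"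
        unfolding inner1 by (simp add: algebra_simps add_divide_distrib)
    qed
    also have "\<dots> = ((\<integral>x. f (circ (fst x), circ (snd x)) * T x \<partial>(LL \<Otimes>\<^sub>M LL)) + (\<integral>x. cnj (f (circ (fst x), circ (snd x))) * T x \<partial>(LL \<Otimes>\<^sub>M LL))) / 2"
      using i1 i2 by (simp del: complex_cnj_mult)
    also have "\<dots> = 0" using holo2[OF hol n m] unfolding T_def by simp
    finally show ?thesis .
  qed
  define c where "c = ((1/2::complex) ^ n) * ((1/2) ^ m)"
  have inner2: "(\<integral>x. K \<zeta> x \<partial>(LL \<Otimes>\<^sub>M LL)) = indicator torus2 \<zeta> * (c * (cnj (fst \<zeta>) ^ n * snd \<zeta> ^ m))" for \<zeta>
  proof (cases "\<zeta> \<in> torus2")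
    case True
    hence a: "norm (fst \<zeta>) = 1" "norm (snd \<zeta>) = 1" by (auto simp: torus2_def)
    have "(\<integral>x. K \<zeta> x \<partial>(LL \<Otimes>\<^sub>M LL)) = integral\<^sup>L (LL \<Otimes>\<^sub>M LL) (\<lambda>x. complex_of_real (P1 (circ (fst x)) (fst \<zeta>) * P1 (circ (snd x)) (snd \<zeta>)) * (cnj (ee (fst x)) ^ n * ee (snd x) ^ m))"
      unfolding K_def T_def Qeq[OF True] ..
    also have "\<dots> = ((1/2) ^ n * cnj (fst \<zeta>) ^ n) * ((1/2) ^ m * snd \<zeta> ^ m)"
      by (rule coef2[OF a n m])
    finally show ?thesis using True by (simp add: c_def algebra_simps)
  next
    case False thus ?thesis by (simp add: K_def Q_def)
  qed
  have X: "(\<lambda>\<zeta>. cnj (fst \<zeta>) ^ n * snd \<zeta> ^ m) \<in> borel_measurable M"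
  proof -
    have "(\<lambda>\<zeta>::complex\<times>complex. cnj (fst \<zeta>) ^ n * snd \<zeta> ^ m) \<in> borel_measurable borel"
      by (intro borel_measurable_continuous_onI continuous_intros)
    thus ?thesis by (simp add: measurable_cong_sets[OF sM refl])
  qed
  have "integral\<^sup>L M (\<lambda>\<zeta>. cnj (fst \<zeta>) ^ n * snd \<zeta> ^ m) = integral\<^sup>L M (\<lambda>\<zeta>. indicator torus2 \<zeta> * (cnj (fst \<zeta>) ^ n * snd \<zeta> ^ m))"
  proof (rule integral_cong_AE)
    show "(\<lambda>\<zeta>. indicator torus2 \<zeta> * (cnj (fst \<zeta>) ^ n * snd \<zeta> ^ m)) \<in> borel_measurable M"
      using X by (simp add: measurable_cong_sets[OF sM refl])
    show "AE \<zeta> in M. cnj (fst \<zeta>) ^ n * snd \<zeta> ^ m = indicator torus2 \<zeta> * (cnj (fst \<zeta>) ^ n * snd \<zeta> ^ m)"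
      using tAE by eventually_elim simp
  qed (rule X)
  also have "\<dots> = integral\<^sup>L M (\<lambda>\<zeta>. c * (indicator torus2 \<zeta> * (cnj (fst \<zeta>) ^ n * snd \<zeta> ^ m))) / c"
    by (simp add: c_def)
  also have "integral\<^sup>L M (\<lambda>\<zeta>. c * (indicator torus2 \<zeta> * (cnj (fst \<zeta>) ^ n * snd \<zeta> ^ m))) = 0"
    using Fub LHS inner2 by (simp add: algebra_simps)
  finally show ?thesis by simp
qed

lemma S_point:
  assumes "\<zeta> \<in> S_set n m \<theta> w" "n \<ge> 0" "m \<ge> 0" "w \<le> pi"
  shows "Re (exp (\<i> * complex_of_real \<theta>) * (cnj (fst \<zeta>) ^ nat n * snd \<zeta> ^ nat m)) \<ge> cos w"
proof -
  obtain v1 v2 \<omega> where z: "\<zeta> = Phi (v1, - v2)" and om: "\<omega> \<in> {\<theta> - w .. \<theta> + w}"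
    and e: "exp (\<i> * complex_of_real (of_int n * v1 + of_int m * v2)) = exp (\<i> * complex_of_real \<omega>)"
    using assms(1) unfolding S_set_def by blast
  have "cnj (fst \<zeta>) ^ nat n * snd \<zeta> ^ nat m = cnj (exp (\<i> * complex_of_real v1) ^ nat n * exp (\<i> * complex_of_real v2) ^ nat m)"
    unfolding z Phi_def by (simp add: exp_cnj)
  also have "exp (\<i> * complex_of_real v1) ^ nat n * exp (\<i> * complex_of_real v2) ^ nat m
      = exp (\<i> * complex_of_real (of_int n * v1 + of_int m * v2))"
  proof -
    have "exp (\<i> * complex_of_real v1) ^ nat n = exp (of_nat (nat n) * (\<i> * complex_of_real v1))"
      by (rule exp_of_nat_mult[symmetric])
    moreover have "exp (\<i> * complex_of_real v2) ^ nat m = exp (of_nat (nat m) * (\<i> * complex_of_real v2))"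
      by (rule exp_of_nat_mult[symmetric])
    moreover have "of_nat (nat n) = complex_of_real (of_int n)" "of_nat (nat m) = complex_of_real (of_int m)"
      using assms(2,3) by (simp_all add: of_nat_nat)
    ultimately show ?thesis by (simp add: exp_add[symmetric] algebra_simps)
  qed
  finally have X: "cnj (fst \<zeta>) ^ nat n * snd \<zeta> ^ nat m = cnj (cis \<omega>)"
    using e by (simp add: cis_conv_exp)
  have "exp (\<i> * complex_of_real \<theta>) * cnj (cis \<omega>) = cis (\<theta> - \<omega>)"
    by (simp add: cis_conv_exp[symmetric] cis_cnj cis_mult)
  hence "Re (exp (\<i> * complex_of_real \<theta>) * (cnj (fst \<zeta>) ^ nat n * snd \<zeta> ^ nat m)) = cos (\<theta> - \<omega>)"
    unfolding X by simp
  also have "cos (\<theta> - \<omega>) = cos \<bar>\<theta> - \<omega>\<bar>" by simp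
  also have "cos \<bar>\<theta> - \<omega>\<bar> \<ge> cos w"
    using om assms(4) by (intro cos_monotone_0_pi_le) auto
  finally show ?thesis .
qed

lemma main_part:
  fixes n m :: int
  assumes RP: "pos_RP_measure M" and nz: "emeasure M (space M) \<noteq> 0"
    and n: "n \<ge> 1" and m: "m \<ge> 1" and w: "0 \<le> w" "w < pi / 2"
    and sub: "measure_support M \<subseteq> S_set n m \<theta> w"
  shows False
proof -
  have sM: "sets M = sets borel" and fM: "finite_measure M" using RP by (auto simp: pos_RP_measure_def)
  interpret M: finite_measure M by (rule fM)
  define X where "X \<zeta> = cnj (fst \<zeta>) ^ nat n * snd \<zeta> ^ nat m" for \<zeta> :: "complex \<times> complex"
  define c where "c = exp (\<i> * complex_of_real \<theta>)"
  have X0: "integral\<^sup>L M X = 0" unfolding X_def by (rule coef_zero[OF RP]) (use n m in auto)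
  have mX: "X \<in> borel_measurable M"
  proof -
    have "X \<in> borel_measurable borel" unfolding X_def
      by (intro borel_measurable_continuous_onI continuous_intros)
    thus ?thesis by (simp add: measurable_cong_sets[OF sM refl])
  qed
  have iX: "integrable M X"
  proof (rule M.integrable_const_bound[where B=1])
    show "AE x in M. norm (X x) \<le> 1"
      using torus_AE[OF RP] by eventually_elim (auto simp: X_def torus2_def norm_mult norm_power)
  qed (rule mX)
  have iR: "integrable M (\<lambda>\<zeta>. Re (c * X \<zeta>))"
    using iX by (intro integrable_Re integrable_mult_right)
  have AEb: "AE \<zeta> in M. cos w \<le> Re (c * X \<zeta>)"
    using supp_AE[OF sM]
  proof eventually_elim
    case (elim \<zeta>)
    hence "\<zeta> \<in> S_set n m \<theta> w" using sub by auto
    thus ?case unfolding X_def c_def by (rule S_point) (use n m w in auto)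
  qed
  have "(\<integral>\<zeta>. cos w \<partial>M) \<le> (\<integral>\<zeta>. Re (c * X \<zeta>) \<partial>M)"
    by (rule integral_mono_AE[OF _ iR AEb]) simp
  also have "(\<integral>\<zeta>. Re (c * X \<zeta>) \<partial>M) = Re (c * integral\<^sup>L M X)"
    using iX by simp
  also have "\<dots> = 0" using X0 by simp
  finally have le: "measure M (space M) * cos w \<le> 0" by simp
  have "cos w > 0" using w by (intro cos_gt_zero_pi) auto
  moreover have "measure M (space M) > 0"
    using nz M.emeasure_eq_measure[of "space M"] by (simp add: zero_less_measure_iff)
  ultimately have "measure M (space M) * cos w > 0" by (simp add: mult_pos_pos)
  thus False using le by linarith
qed

theorem mainTheorem8:
  fixes n m :: int and \<theta> w :: real
  assumes "n \<ge> 1" and "m \<ge> 1"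
    and "0 \<le> \<theta>" and "\<theta> < 2 * pi"
    and "0 \<le> w" and "w < pi / 2"
  shows "(\<forall>M. pos_RP_measure M \<and> emeasure M (space M) \<noteq> 0 \<longrightarrow>
            \<not> measure_support M \<subseteq> S_set n m \<theta> w)
       \<and> (\<forall>M. pos_RP_measure M \<and> emeasure M (space M) \<noteq> 0 \<longrightarrow>
            \<not> measure_support M \<subseteq> S'_set n \<theta> w)"
proof (intro conjI allI impI notI)
  fix M assume "pos_RP_measure M \<and> emeasure M (space M) \<noteq> 0" "measure_support M \<subseteq> S_set n m \<theta> w"
  thus False using main_part[of M n m w \<theta>] assms by blast
next
  fix M assume a: "pos_RP_measure M \<and> emeasure M (space M) \<noteq> 0" and s: "measure_support M \<subseteq> S'_set n \<theta> w"
  have "S'_set n \<theta> w \<subseteq> S_set n 1 \<theta> w"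
  proof
    fix x assume "x \<in> S'_set n \<theta> w"
    then obtain v1 \<omega> where x: "x = Phi (v1, of_int n * v1 - \<omega>)" and om: "\<omega> \<in> {\<theta> - w .. \<theta> + w}"
      unfolding S'_set_def by blast
    have "x = Phi (v1, - (\<omega> - of_int n * v1))" using x by simp
    moreover have "exp (\<i> * complex_of_real (of_int n * v1 + of_int 1 * (\<omega> - of_int n * v1))) = exp (\<i> * complex_of_real \<omega>)"
      by simp
    ultimately show "x \<in> S_set n 1 \<theta> w" unfolding S_set_def using om by blast
  qed
  thus False using main_part[of M n 1 w \<theta>] a s assms by auto
qed

end
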